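(* Let $m\ge1$, let $p$ be a prime, and let $\lambda\vdash n$ be a partition with $2$-core of size $\binom{m+1}{2}$. If $w_p(\lambda)=t\le\lfloor\frac{m+1}{2}\rfloor$, then $n\ge N_t:=tp-t(2(m-t)+1)+\binom{m+1}{2}$.
   Context: Partitions $\lambda=(\lambda_1\ge\dots\ge\lambda_r\ge0)$ may have zero parts; the degree sequence is $n_\lambda=(\lambda_r,\lambda_{r-1}+1,\dots,\lambda_1+r-1)$. For an integer $q\ge1$, removing a $q$-hook from $\lambda$ means replacing an entry $a$ of $n_\lambda$ by $a-q$, where $a-q\ge0$ and $a-q\notin n_\lambda$, and taking the partition of the same length with the resulting degree sequence (equivalently removing a connected border strip of $q$ cells from the Young diagram). The $q$-weight $w_q(\lambda)$ is the maximal number of $q$-hooks that can be removed successively. Removing $2$-hooks until impossible yields the $2$-core, which is a staircase $(m,m-1,\dots,1)$ padded with zeros, of size $\binom{m+1}{2}$. *)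

theory Defs
  imports Main "HOL-Computational_Algebra.Primes"
begin

text \<open>A partition (possibly with zero parts) is a weakly decreasing list of naturals
  (lambda_1 >= ... >= lambda_r >= 0); its size is the sum of its parts.\<close>
definition is_partition :: "nat list \<Rightarrow> bool" where
  "is_partition lam \<longleftrightarrow> sorted_wrt (\<ge>) lam"

text \<open>Degree sequence (beta-set): the set of numbers lambda_i + (r - i), i = 1..r
  (0-indexed here: lam!i + (r - 1 - i)).\<close>
definition degseq :: "nat list \<Rightarrow> nat set" where
  "degseq lam = {lam ! i + (length lam - 1 - i) | i. i < length lam}"

text \<open>mu is obtained from lam by removing a q-hook: replace an entry a of the degree
  sequence by a - q (with a - q >= 0 not already present), keeping the same length.\<close>
definition remove_hook :: "nat \<Rightarrow> nat list \<Rightarrow> nat list \<Rightarrow> bool" where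
  "remove_hook q lam mu \<longleftrightarrow> is_partition mu \<and> length mu = length lam \<and>
     (\<exists>a\<in>degseq lam. q \<le> a \<and> a - q \<notin> degseq lam \<and>
        degseq mu = insert (a - q) (degseq lam - {a}))"

definition weight :: "nat \<Rightarrow> nat list \<Rightarrow> nat" where
  "weight q lam = (GREATEST k. \<exists>mu. (remove_hook q ^^ k) lam mu)"

definition two_core_size :: "nat list \<Rightarrow> nat \<Rightarrow> bool" where
  "two_core_size lam s \<longleftrightarrow> (\<exists>mu. (remove_hook 2)\<^sup>*\<^sup>* lam mu \<and>
      \<not> (\<exists>nu. remove_hook 2 mu nu) \<and> sum_list mu = s)"

end

theory Submission
  imports Defs
begin

definition Ev :: "nat set \<Rightarrow> nat" where "Ev X = card {x\<in>X. even x}"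
definition Od :: "nat set \<Rightarrow> nat" where "Od X = card {x\<in>X. odd x}"
definition kk :: "nat set \<Rightarrow> int" where "kk X = int (Od X) - int (Ev X)"

lemma sum_lower:
  fixes f :: "nat \<Rightarrow> nat"
  assumes "strict_mono f"
  shows "finite A \<Longrightarrow> card A = c \<Longrightarrow> (\<Sum>i<c. f i) \<le> (\<Sum>i\<in>A. f i)"
proof (induction c arbitrary: A)
  case 0 then show ?case by simp
next
  case (Suc c)
  have ne: "A \<noteq> {}" using Suc.prems by auto
  define M where "M = Max A"
  have MA: "M \<in> A" using Suc.prems ne by (simp add: M_def)
  have "A \<subseteq> {..M}" using Suc.prems by (auto simp: M_def)
  then have "card A \<le> card {..M}" by (rule card_mono[OF finite_atMost])
  then have "card A \<le> Suc M" by simp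
  then have cM: "c \<le> M" using Suc.prems by simp
  have "card (A - {M}) = c" using Suc.prems MA by simp
  then have IH: "(\<Sum>i<c. f i) \<le> (\<Sum>i\<in>A-{M}. f i)" using Suc.IH Suc.prems by simp
  have "f c \<le> f M" using cM assms strict_mono_less_eq by blast
  moreover have "(\<Sum>i\<in>A. f i) = f M + (\<Sum>i\<in>A-{M}. f i)" using sum.remove[OF Suc.prems(1) MA] .
  ultimately show ?case using IH by simp
qed

lemma down_closed_eq:
  assumes "finite A" "\<And>x y. x \<in> A \<Longrightarrow> y \<le> x \<Longrightarrow> y \<in> A"
  shows "A = {..<card A}"
proof -
  have "A \<subseteq> {..<card A}"
  proof
    fix x assume "x \<in> A"
    then have "{..x} \<subseteq> A" using assms(2) by auto
    then have "card {..x} \<le> card A" using assms(1) card_mono by blast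
    then show "x \<in> {..<card A}" by simp
  qed
  then show ?thesis by (metis card_lessThan card_subset_eq finite_lessThan)
qed

lemma sum_even: "(\<Sum>i<n. 2*i) + n = n*(n::nat)"
  by (induction n) (auto simp: algebra_simps)
lemma sum_odd: "(\<Sum>i<n. 2*i+1) = n*(n::nat)"
  by (induction n) (auto simp: algebra_simps)
lemma sum_id: "2*(\<Sum>i<n. i) + n = n*(n::nat)"
  by (induction n) (auto simp: algebra_simps)

lemma split_set:
  fixes X :: "nat set"
  assumes "finite X"
  shows "finite {i. 2*i \<in> X}" "finite {i. 2*i+1 \<in> X}"
    "Ev X = card {i. 2*i \<in> X}" "Od X = card {i. 2*i+1 \<in> X}"
    "\<Sum>X = (\<Sum>i\<in>{i. 2*i \<in> X}. 2*i) + (\<Sum>i\<in>{i. 2*i+1 \<in> X}. 2*i+1)"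
proof -
  define A where "A = {i. 2*i \<in> X}"
  define B where "B = {i. 2*i+1 \<in> X}"
  have i1: "inj (\<lambda>i::nat. 2*i)" by (simp add: inj_on_def)
  have i2: "inj (\<lambda>i::nat. 2*i+1)" by (simp add: inj_on_def)
  have fA: "finite A" unfolding A_def using finite_vimageI[OF assms i1] by (simp add: vimage_def)
  have fB: "finite B" unfolding B_def using finite_vimageI[OF assms i2] by (simp add: vimage_def)
  have eA: "{x\<in>X. even x} = (\<lambda>i. 2*i) ` A" unfolding A_def by (auto elim: evenE)
  have eB: "{x\<in>X. odd x} = (\<lambda>i. 2*i+1) ` B" unfolding B_def by (auto elim: oddE)
  have XU: "X = (\<lambda>i. 2*i) ` A \<union> (\<lambda>i. 2*i+1) ` B" using eA eB by blast
  have dj: "(\<lambda>i. 2*i) ` A \<inter> (\<lambda>i. 2*i+1) ` B = {}" by auto presburger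
  have "\<Sum>X = \<Sum>((\<lambda>i. 2*i) ` A) + \<Sum>((\<lambda>i. 2*i+1) ` B)"
    by (subst XU, rule sum.union_disjoint) (use fA fB dj in auto)
  also have "\<dots> = (\<Sum>i\<in>A. 2*i) + (\<Sum>i\<in>B. 2*i+1)"
    by (simp add: sum.reindex inj_on_def)
  finally show "\<Sum>X = (\<Sum>i\<in>{i. 2*i \<in> X}. 2*i) + (\<Sum>i\<in>{i. 2*i+1 \<in> X}. 2*i+1)"
    unfolding A_def B_def .
  show "finite {i. 2*i \<in> X}" "finite {i. 2*i+1 \<in> X}" using fA fB A_def B_def by auto
  show "Ev X = card {i. 2*i \<in> X}" unfolding Ev_def eA A_def[symmetric]
    using card_image[OF inj_on_subset[OF i1 subset_UNIV, of A]] by simp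
  show "Od X = card {i. 2*i+1 \<in> X}" unfolding Od_def eB B_def[symmetric]
    using card_image[OF inj_on_subset[OF i2 subset_UNIV, of B]] by simp
qed

lemma ev_od: "finite X \<Longrightarrow> Ev X + Od X = card X"
proof -
  assume f: "finite X"
  have "X = {x\<in>X. even x} \<union> {x\<in>X. odd x}" by auto
  then have "card X = card ({x\<in>X. even x} \<union> {x\<in>X. odd x})" by simp
  also have "\<dots> = Ev X + Od X" unfolding Ev_def Od_def
    by (rule card_Un_disjoint) (use f in auto)
  finally show ?thesis by simp
qed

lemma set_lower:
  assumes "finite X"
  shows "Ev X * Ev X + Od X * Od X \<le> \<Sum>X + Ev X"
proof -
  note s = split_set[OF assms]
  have sm1: "strict_mono (\<lambda>i::nat. 2*i)" by (simp add: strict_mono_def)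
  have sm2: "strict_mono (\<lambda>i::nat. 2*i+1)" by (simp add: strict_mono_def)
  have a: "(\<Sum>i<Ev X. 2*i) \<le> (\<Sum>i\<in>{i. 2*i \<in> X}. 2*i)"
    using sum_lower[OF sm1 s(1)] s(3) by simp
  have b: "(\<Sum>i<Od X. 2*i+1) \<le> (\<Sum>i\<in>{i. 2*i+1 \<in> X}. 2*i+1)"
    using sum_lower[OF sm2 s(2)] s(4) by simp
  show ?thesis using a b s(5) sum_even[of "Ev X"] sum_odd[of "Od X"] by linarith
qed

lemma down2: "(\<forall>x\<in>X. 2 \<le> x \<longrightarrow> x - 2 \<in> X) \<Longrightarrow> c + 2*d \<in> X \<Longrightarrow> c \<in> (X::nat set)"
proof (induction d)
  case 0 then show ?case by simp
next
  case (Suc d)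
  then have "c + 2*Suc d - 2 \<in> X" by auto
  then show ?case using Suc by simp
qed

lemma set_exact:
  assumes "finite X" "\<forall>x\<in>X. 2 \<le> x \<longrightarrow> x - 2 \<in> X"
  shows "Ev X * Ev X + Od X * Od X = \<Sum>X + Ev X"
proof -
  note s = split_set[OF assms(1)]
  have dA: "{i. 2*i \<in> X} = {..<Ev X}"
  proof -
    have "{i. 2*i \<in> X} = {..<card {i. 2*i \<in> X}}"
    proof (rule down_closed_eq[OF s(1)])
      fix x y assume "x \<in> {i. 2*i \<in> X}" "y \<le> x"
      moreover have "2*y + 2*(x-y) = 2*x" using \<open>y \<le> x\<close> by simp
      ultimately have "2*y + 2*(x-y) \<in> X" by simp
      then show "y \<in> {i. 2*i \<in> X}" using down2[OF assms(2)] by blast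
    qed
    then show ?thesis using s(3) by simp
  qed
  have dB: "{i. 2*i+1 \<in> X} = {..<Od X}"
  proof -
    have "{i. 2*i+1 \<in> X} = {..<card {i. 2*i+1 \<in> X}}"
    proof (rule down_closed_eq[OF s(2)])
      fix x y assume "x \<in> {i. 2*i+1 \<in> X}" "y \<le> x"
      moreover have "(2*y+1) + 2*(x-y) = 2*x+1" using \<open>y \<le> x\<close> by simp
      ultimately have "(2*y+1) + 2*(x-y) \<in> X" by simp
      then show "y \<in> {i. 2*i+1 \<in> X}" using down2[OF assms(2)] by blast
    qed
    then show ?thesis using s(4) by simp
  qed
  show ?thesis using s(5) dA dB sum_even[of "Ev X"] sum_odd[of "Od X"] by simp
qed


definition dd :: "nat list \<Rightarrow> nat \<Rightarrow> nat" where
  "dd lam i = lam!i + (length lam - 1 - i)"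

lemma deg_image: "degseq lam = dd lam ` {..<length lam}"
  unfolding degseq_def dd_def image_def lessThan_iff by blast

lemma deg_lt:
  assumes "is_partition lam" "i < j" "j < length lam"
  shows "lam!j + (length lam - 1 - j) < lam!i + (length lam - 1 - i)"
proof -
  have "lam!j \<le> lam!i" using assms sorted_wrt_nth_less[of "(\<ge>)" lam i j]
    unfolding is_partition_def by simp
  then show ?thesis using assms(2,3) by linarith
qed

lemma deg_inj:
  assumes "is_partition lam"
  shows "inj_on (dd lam) {..<length lam}"
  unfolding inj_on_def dd_def
proof (intro ballI impI)
  fix i j assume "i \<in> {..<length lam}" "j \<in> {..<length lam}"
    "lam!i + (length lam - 1 - i) = lam!j + (length lam - 1 - j)"
  then show "i = j" using deg_lt[OF assms, of i j] deg_lt[OF assms, of j i]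
    by (metis lessThan_iff linorder_neqE_nat order_less_irrefl)
qed

lemma deg_fin: "finite (degseq lam)"
  by (simp add: deg_image)

lemma deg_card: "is_partition lam \<Longrightarrow> card (degseq lam) = length lam"
  unfolding deg_image using card_image[OF deg_inj] by simp

lemma deg_sum:
  assumes "is_partition lam"
  shows "2 * \<Sum>(degseq lam) + length lam = 2 * sum_list lam + length lam * length lam"
proof -
  let ?r = "length lam"
  have "\<Sum>(degseq lam) = (\<Sum>i<?r. dd lam i)"
    unfolding deg_image by (simp add: sum.reindex[OF deg_inj[OF assms]])
  also have "\<dots> = (\<Sum>i<?r. lam!i + (?r - 1 - i))" unfolding dd_def by simp
  also have "\<dots> = (\<Sum>i<?r. lam!i + (?r - Suc i))" by simp
  also have "\<dots> = (\<Sum>i<?r. lam!i) + (\<Sum>i<?r. ?r - Suc i)" by (rule sum.distrib)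
  also have "(\<Sum>i<?r. ?r - Suc i) = (\<Sum>i<?r. i)" using sum.nat_diff_reindex[of "\<lambda>i. i" ?r] by simp
  also have "(\<Sum>i<?r. lam!i) = sum_list lam" by (simp add: sum_list_sum_nth atLeast0LessThan)
  finally show ?thesis using sum_id[of ?r] by linarith
qed

lemma strict_nth:
  assumes "sorted_wrt (<) (s::nat list)" "j \<le> j'" "j' < length s"
  shows "s!j + (j' - j) \<le> s!j'"
  using assms(2,3)
proof (induction j' rule: dec_induct)
  case base then show ?case by simp
next
  case (step k)
  have "s!k < s!Suc k" using assms(1) sorted_wrt_nth_less step by fastforce
  then show ?case using step by simp
qed

definition pos :: "nat set \<Rightarrow> nat list" where
  "pos Y = rev (map (\<lambda>j. sorted_list_of_set Y ! j - j) [0..<card Y])"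

lemma pos_props:
  assumes "finite Y"
  shows "is_partition (pos Y)" "length (pos Y) = card Y" "degseq (pos Y) = Y"
proof -
  define s where "s = sorted_list_of_set Y"
  define r where "r = card Y"
  have ls: "length s = r" unfolding s_def r_def by simp
  have ss: "sorted_wrt (<) s" unfolding s_def by simp
  have setS: "set s = Y" unfolding s_def using assms by simp
  have nth: "pos Y ! i = s!(r-1-i) - (r-1-i)" if "i < r" for i
    using that unfolding pos_def s_def[symmetric] r_def[symmetric] by (simp add: rev_nth)
  have ge: "j \<le> s!j" if "j < r" for j using strict_nth[OF ss, of 0 j] that ls by simp
  show len: "length (pos Y) = card Y" unfolding pos_def by simp
  show "is_partition (pos Y)" unfolding is_partition_def sorted_wrt_iff_nth_less
  proof (intro allI impI)
    fix i j assume ij: "i < j" "j < length (pos Y)"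
    then have jr: "j < r" using len r_def by simp
    have "s!(r-1-j) + ((r-1-i) - (r-1-j)) \<le> s!(r-1-i)"
      using strict_nth[OF ss, of "r-1-j" "r-1-i"] ij jr ls by simp
    moreover have "r-1-j \<le> s!(r-1-j)" using ge jr by simp
    ultimately show "pos Y ! i \<ge> pos Y ! j" using nth ij jr by simp
  qed
  show "degseq (pos Y) = Y"
  proof
    show "degseq (pos Y) \<subseteq> Y"
    proof
      fix y assume "y \<in> degseq (pos Y)"
      then obtain i where i: "i < r" "y = pos Y ! i + (r - 1 - i)"
        unfolding deg_image dd_def using len r_def by auto
      then have "y = s!(r-1-i)" using nth ge[of "r-1-i"] by simp
      then show "y \<in> Y" using setS ls i by auto
    qed
    show "Y \<subseteq> degseq (pos Y)"
    proof
      fix y assume "y \<in> Y"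
      then obtain j where j: "j < r" "y = s!j" using setS ls by (metis in_set_conv_nth)
      define i where "i = r - 1 - j"
      have i: "i < r" "r - 1 - i = j" using j unfolding i_def by auto
      have "y = dd (pos Y) i" unfolding dd_def
        using nth[OF i(1)] i ge[OF j(1)] j len r_def by simp
      moreover have "i \<in> {..<length (pos Y)}" using i len r_def by simp
      ultimately show "y \<in> degseq (pos Y)" unfolding deg_image by (rule image_eqI)
    qed
  qed
qed

lemma card_filter_change:
  assumes "finite X" "a \<in> X" "b \<notin> X"
  shows "int (card {x\<in>insert b (X-{a}). P x}) = int (card {x\<in>X. P x})
           - (if P a then 1 else 0) + (if P b then 1 else 0)"
proof -
  have f: "finite {x\<in>X. P x}" using assms by simp
  have e: "{x\<in>insert b (X-{a}). P x} = (if P b then insert b ({x\<in>X. P x} - {a}) else {x\<in>X. P x} - {a})"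
    using assms by auto
  have bF: "b \<notin> {x\<in>X. P x} - {a}" using assms by auto
  have c1: "P a \<Longrightarrow> card ({x\<in>X. P x} - {a}) + 1 = card {x\<in>X. P x}"
    using f assms by (metis (mono_tags, lifting) card_Suc_Diff1 mem_Collect_eq Suc_eq_plus1)
  have c2: "\<not> P a \<Longrightarrow> {x\<in>X. P x} - {a} = {x\<in>X. P x}" by auto
  have c3: "card (insert b ({x\<in>X. P x} - {a})) = card ({x\<in>X. P x} - {a}) + 1"
    using bF f by simp
  have c1': "P a \<Longrightarrow> int (card ({x\<in>X. P x} - {a})) = int (card {x\<in>X. P x}) - 1"
    using c1 by fastforce
  show ?thesis unfolding e
    by (cases "P a"; cases "P b") (simp_all add: c1' c2 c3 f assms(3))
qed

lemma rh_basic: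
  assumes "remove_hook q lam mu" "is_partition lam"
  shows "is_partition mu" "length mu = length lam" "sum_list mu + q = sum_list lam"
    "\<bar>kk (degseq mu) - kk (degseq lam)\<bar> \<le> 2"
    "q = 2 \<Longrightarrow> kk (degseq mu) = kk (degseq lam)"
proof -
  have rh: "is_partition mu \<and> length mu = length lam \<and>
     (\<exists>a\<in>degseq lam. q \<le> a \<and> a - q \<notin> degseq lam \<and>
        degseq mu = insert (a - q) (degseq lam - {a}))" using assms(1) unfolding remove_hook_def .
  then show pm: "is_partition mu" and lm: "length mu = length lam" by blast+
  from rh obtain a where a: "a \<in> degseq lam" "q \<le> a" "a - q \<notin> degseq lam"
    "degseq mu = insert (a - q) (degseq lam - {a})" by blast
  let ?X = "degseq lam"
  have fX: "finite ?X" by (rule deg_fin)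
  have fX': "finite (?X - {a})" using fX by (rule finite_Diff)
  have na: "a - q \<notin> ?X - {a}" using a(3) by blast
  have s1: "\<Sum>(degseq mu) = (a - q) + \<Sum>(?X - {a})" unfolding a(4) by (rule sum.insert[OF fX' na])
  have s2: "\<Sum>?X = a + \<Sum>(?X - {a})" by (rule sum.remove[OF fX a(1)])
  have "\<Sum>(degseq mu) + q = \<Sum>?X" using s1 s2 a(2) by linarith
  moreover have "2*\<Sum>(degseq mu) + length lam = 2*sum_list mu + length lam*length lam"
    using deg_sum[OF pm] lm by simp
  ultimately show "sum_list mu + q = sum_list lam" using deg_sum[OF assms(2)] by linarith
  have E: "int (Ev (degseq mu)) = int (Ev ?X) - (if even a then 1 else 0) + (if even (a-q) then 1 else 0)"
    unfolding Ev_def a(4) by (rule card_filter_change[OF fX a(1) a(3)])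
  have O: "int (Od (degseq mu)) = int (Od ?X) - (if odd a then 1 else 0) + (if odd (a-q) then 1 else 0)"
    unfolding Od_def a(4) by (rule card_filter_change[OF fX a(1) a(3)])
  show "\<bar>kk (degseq mu) - kk (degseq lam)\<bar> \<le> 2" unfolding kk_def E O
    by (cases "even a"; cases "even (a-q)") simp_all
  show "q = 2 \<Longrightarrow> kk (degseq mu) = kk (degseq lam)"
  proof -
    assume "q = 2"
    then have ev: "even (a - q) = even a" using a(2) by auto
    show ?thesis unfolding kk_def E O ev by simp
  qed
qed

lemma rh_pow:
  "(remove_hook q ^^ y) lam mu \<Longrightarrow> is_partition lam \<Longrightarrow>
    is_partition mu \<and> length mu = length lam \<and> sum_list mu + y*q = sum_list lam \<and>
    \<bar>kk (degseq mu) - kk (degseq lam)\<bar> \<le> 2 * int y"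
proof (induction y arbitrary: mu)
  case 0 then show ?case by simp
next
  case (Suc y)
  from Suc.prems(1) obtain z where z: "(remove_hook q ^^ y) lam z" "remove_hook q z mu" by auto
  note IH = Suc.IH[OF z(1) Suc.prems(2)]
  note B = rh_basic[OF z(2)] 
  show ?case using IH B by (auto simp: algebra_simps)
qed

lemma rh2_star:
  "(remove_hook 2)\<^sup>*\<^sup>* lam mu \<Longrightarrow> is_partition lam \<Longrightarrow>
    is_partition mu \<and> length mu = length lam \<and> kk (degseq mu) = kk (degseq lam)"
proof (induction rule: rtranclp_induct)
  case base then show ?case by simp
next
  case (step y z)
  then show ?case using rh_basic[of 2 y z] by auto
qed

lemma part_lower:
  assumes "is_partition mu"
  shows "(2 * kk (degseq mu) + 1)^2 \<le> 8 * int (sum_list mu) + 1"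
proof -
  let ?X = "degseq mu"
  define E where "E = int (Ev ?X)"
  define Oo where "Oo = int (Od ?X)"
  have "Ev ?X + Od ?X = length mu" using ev_od[OF deg_fin, of mu] deg_card[OF assms] by simp
  then have r: "int (length mu) = E + Oo" unfolding E_def Oo_def by (metis of_nat_add)
  have h1: "2 * int (\<Sum>?X) + int (length mu) = 2 * int (sum_list mu) + int (length mu) * int (length mu)"
    using arg_cong[OF deg_sum[OF assms], of int] by simp
  have h2: "E*E + Oo*Oo \<le> int (\<Sum>?X) + E"
  proof -
    have "int (Ev ?X * Ev ?X + Od ?X * Od ?X) \<le> int (\<Sum>?X + Ev ?X)"
      using set_lower[OF deg_fin, of mu] by (simp only: of_nat_le_iff)
    then show ?thesis unfolding E_def Oo_def by simp
  qed
  have k: "kk ?X = Oo - E" unfolding kk_def E_def Oo_def by simp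
  have id: "(2 * (Oo - E) + 1)^2 = 4*(Oo*Oo) - 8*(E*Oo) + 4*(E*E) + 4*Oo - 4*E + 1"
    by (simp add: power2_eq_square algebra_simps)
  have id2: "(E+Oo)*(E+Oo) = E*E + 2*(E*Oo) + Oo*Oo" by (simp add: algebra_simps)
  have h1': "2 * int (\<Sum>?X) + (E+Oo) = 2 * int (sum_list mu) + (E+Oo)*(E+Oo)"
    using h1 unfolding r .
  show ?thesis unfolding k id using h1' h2 id2 by linarith
qed


lemma core_exact:
  assumes "is_partition mu" "\<not> (\<exists>nu. remove_hook 2 mu nu)"
  shows "(2 * kk (degseq mu) + 1)^2 = 8 * int (sum_list mu) + 1"
proof -
  let ?X = "degseq mu"
  have cl: "\<forall>x\<in>?X. 2 \<le> x \<longrightarrow> x - 2 \<in> ?X"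
  proof (rule ccontr)
    assume "\<not> (\<forall>x\<in>?X. 2 \<le> x \<longrightarrow> x - 2 \<in> ?X)"
    then obtain x where x: "x \<in> ?X" "2 \<le> x" "x - 2 \<notin> ?X" by blast
    define Y where "Y = insert (x-2) (?X - {x})"
    have fY: "finite Y" using deg_fin Y_def by simp
    have "card Y = Suc (card (?X - {x}))" unfolding Y_def using x deg_fin by simp
    also have "\<dots> = card ?X" by (rule card_Suc_Diff1[OF deg_fin x(1)])
    finally have "length (pos Y) = length mu" using pos_props(2)[OF fY] deg_card[OF assms(1)] by simp
    then have "remove_hook 2 mu (pos Y)" unfolding remove_hook_def using pos_props[OF fY] x Y_def by blast
    then show False using assms(2) by blast
  qed
  define E where "E = int (Ev ?X)"
  define Oo where "Oo = int (Od ?X)"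
  have "Ev ?X + Od ?X = length mu" using ev_od[OF deg_fin, of mu] deg_card[OF assms(1)] by simp
  then have r: "int (length mu) = E + Oo" unfolding E_def Oo_def by (metis of_nat_add)
  have h1: "2 * int (\<Sum>?X) + int (length mu) = 2 * int (sum_list mu) + int (length mu) * int (length mu)"
    using arg_cong[OF deg_sum[OF assms(1)], of int] by simp
  have h2: "E*E + Oo*Oo = int (\<Sum>?X) + E"
  proof -
    have "int (Ev ?X * Ev ?X + Od ?X * Od ?X) = int (\<Sum>?X + Ev ?X)"
      by (rule arg_cong[where f=int], rule set_exact[OF deg_fin cl])
    then show ?thesis unfolding E_def Oo_def by simp
  qed
  have k: "kk ?X = Oo - E" unfolding kk_def E_def Oo_def by simp
  have id: "(2 * (Oo - E) + 1)^2 = 4*(Oo*Oo) - 8*(E*Oo) + 4*(E*E) + 4*Oo - 4*E + 1"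
    by (simp add: power2_eq_square algebra_simps)
  have id2: "(E+Oo)*(E+Oo) = E*E + 2*(E*Oo) + Oo*Oo" by (simp add: algebra_simps)
  have h1': "2 * int (\<Sum>?X) + (E+Oo) = 2 * int (sum_list mu) + (E+Oo)*(E+Oo)"
    using h1 unfolding r .
  show ?thesis unfolding k id using h1' h2 id2 by linarith
qed

lemma t1: "\<bar>a::int\<bar> \<le> \<bar>b\<bar> \<Longrightarrow> a^2 \<le> b^2" using abs_le_square_iff by blast
lemma t2: "\<bar>1::int\<bar> \<le> \<bar>2*k1+1\<bar>" by (cases "k1 \<ge> 0") auto
lemma t3: "(J::int) - 4 * t = -1 \<Longrightarrow> (J - 4*t)^2 \<le> (2*k1+1)^2"
proof -
  assume h: "J - 4*t = -1"
  have "1^2 \<le> (2*k1+1)^2" using t2 abs_le_square_iff[of 1 "2*k1+1"] by blast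
  then show ?thesis using h by simp
qed
lemma t4:
  fixes s1 C t p m n J :: int
  assumes sq: "(J - 4 * t)^2 \<le> (2*k1+1)^2"
  and id: "(J - 4 * t)^2 = 4 * (m * m) + 4 * m + 1 - 16 * (t * m) - 8 * t + 16 * (t * t)"
  and low: "(2*k1+1)^2 \<le> 8*s1+1" and sn: "s1 + t * p = n" and C2': "2*C = m * m + m"
  shows "t * p - 2 * (t * m) + 2 * (t * t) - t + C \<le> n"
  using sq id low sn C2' by linarith

lemma choose2: "2 * ((m+1) choose 2) = (m+1) * m"
  by (induction m) (auto simp: numeral_2_eq_2)

theorem mainTheorem9:
  fixes m p t n :: nat and lam :: "nat list"
  assumes "m \<ge> 1" and "prime p"
    and "is_partition lam" and "sum_list lam = n"
    and "two_core_size lam ((m + 1) choose 2)"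
    and "weight p lam = t" and "t \<le> (m + 1) div 2"
  shows "int n \<ge> int t * int p - int t * (2 * (int m - int t) + 1) + int ((m + 1) choose 2)"
proof -
  let ?P = "\<lambda>k. \<exists>mu. (remove_hook p ^^ k) lam mu"
  have p2: "p \<ge> 2" using assms(2) prime_ge_2_nat by blast
  have P0: "?P 0" by auto
  have bnd: "y \<le> n" if "(remove_hook p ^^ y) lam mu" for y mu
  proof -
    have "sum_list mu + y*p = n" using rh_pow[OF that assms(3)] assms(4) by simp
    moreover have "y \<le> y*p" using p2 by simp
    ultimately show "y \<le> n" by linarith
  qed
  have "?P (weight p lam)" unfolding weight_def
  proof (rule GreatestI_nat[where P="?P", OF P0])
    fix y assume "?P y"
    then obtain mu where "(remove_hook p ^^ y) lam mu" by blast
    then show "y \<le> n" by (rule bnd)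
  qed
  then obtain mu1 where mu1: "(remove_hook p ^^ t) lam mu1" using assms(6) by auto
  note R1 = rh_pow[OF mu1 assms(3)]
  obtain mu0 where mu0: "(remove_hook 2)\<^sup>*\<^sup>* lam mu0" "\<not> (\<exists>nu. remove_hook 2 mu0 nu)"
    "sum_list mu0 = (m + 1) choose 2" using assms(5) unfolding two_core_size_def by blast
  note R0 = rh2_star[OF mu0(1) assms(3)]
  define C where "C = int ((m + 1) choose 2)"
  define k0 where "k0 = kk (degseq lam)"
  define k1 where "k1 = kk (degseq mu1)"
  define s1 where "s1 = int (sum_list mu1)"
  have c0: "(2*k0+1)^2 = 8*C+1" using core_exact[OF _ mu0(2)] R0 mu0(3) unfolding k0_def C_def by simp
  have C2: "2*C = (int m + 1) * int m" using arg_cong[OF choose2[of m], of int] unfolding C_def by (simp add: algebra_simps)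
  have low: "(2*k1+1)^2 \<le> 8*s1+1" using part_lower R1 unfolding k1_def s1_def by blast
  have "sum_list mu1 + t*p = n" using R1 assms(4) by simp
  then have "int (sum_list mu1 + t*p) = int n" by simp
  then have sn: "s1 + int t * int p = int n" unfolding s1_def by simp
  have dk: "\<bar>k1 - k0\<bar> \<le> 2 * int t" using R1 unfolding k1_def k0_def by simp
  have tt: "2 * t \<le> m + 1" using assms(7) by presburger
  define J where "J = 2 * int m + 1"
  have "(2*k0+1)^2 = J^2" using c0 C2 unfolding J_def by (simp add: power2_eq_square algebra_simps)
  then have "2*k0+1 = J \<or> 2*k0+1 = -J" using power2_eq_iff by blast
  moreover have "J \<ge> 0" unfolding J_def by simp
  ultimately have aj: "\<bar>2*k0+1\<bar> = J" by auto
  have sq: "(J - 4 * int t)^2 \<le> (2*k1+1)^2"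
  proof (cases "J - 4 * int t \<ge> 0")
    case True
    have "\<bar>J - 4 * int t\<bar> \<le> \<bar>2*k1+1\<bar>" using True aj dk by linarith
    then show ?thesis by (rule t1)
  next
    case False
    then have "J - 4 * int t = -1" using tt unfolding J_def by linarith
    then show ?thesis by (rule t3)
  qed
  have id: "(J - 4 * int t)^2 = 4 * (int m * int m) + 4 * int m + 1 - 16 * (int t * int m) - 8 * int t + 16 * (int t * int t)"
    unfolding J_def by (simp add: power2_eq_square algebra_simps)
  have C2': "2*C = int m * int m + int m" using C2 by (simp add: algebra_simps)
  have goal: "int t * int p - int t * (2 * (int m - int t) + 1) + C = int t * int p - 2 * (int t * int m) + 2 * (int t * int t) - int t + C"
    by (simp add: algebra_simps)
  show ?thesis unfolding C_def[symmetric] goal using t4[OF sq id low sn C2'] .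
qed

end
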